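(* Let $T>0$ and let $f:\Omega\times[0,T]\times\mathbb{R}\times\mathbb{R}^d\to\mathbb{R}$ satisfy $f(\cdot,y,z)\in L^2_{\mathcal{F}}(0,T)$ for each $(y,z)$ and $|f(t,y,z)-f(t,y',z')|\le\mu(|y-y'|+|z-z'|)$. For $(t,y,z)\in[0,T]\times\mathbb{R}\times\mathbb{R}^d$ let $(Y^{t,y,z}_s)_{s\in[t,T]}$ be the solution of $Y^{t,y,z}_s=y-\int_t^sf(r,Y^{t,y,z}_r,z)dr+z(B_s-B_t)$. For $n\ge1$ let $t^n_i=i2^{-n}T$, $i=0,\dots,2^n$, and $$f^n(s,y,z):=\sum_{i=0}^{2^n-1}f(s,Y^{t^n_i,y,z}_s,z)1_{[t^n_i,t^n_{i+1})}(s),\quad s\in[0,T].$$ Then for each fixed $(y,z)$, $\lim_{n\to\infty}E\int_0^T|f^n(s,y,z)-f(s,y,z)|^2ds=0$.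
   Context: $(\Omega,\mathcal{F},P)$ carries a $d$-dimensional Brownian motion $B$ with filtration $\mathcal{F}_t=\sigma\{B_s:s\le t\}$; $L^2_{\mathcal{F}}(0,T)$ denotes real predictable processes $\phi$ with $E\int_0^T|\phi_s|^2ds<\infty$. *)

theory Defs
  imports "HOL-Probability.Probability"
begin

definition brownian_motion :: "'a measure \<Rightarrow> (real \<Rightarrow> 'a \<Rightarrow> real^'d) \<Rightarrow> bool" where
  "brownian_motion M B \<longleftrightarrow>
     prob_space M \<and>
     (\<forall>t. B t \<in> borel_measurable M) \<and>
     (\<forall>\<omega>\<in>space M. B 0 \<omega> = 0 \<and> continuous_on {0..} (\<lambda>t. B t \<omega>)) \<and>
     (\<forall>s u k. 0 \<le> s \<and> s < u \<longrightarrow>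
        distributed M lborel (\<lambda>\<omega>. (B u \<omega> - B s \<omega>) $ k)
          (\<lambda>x. ennreal (normal_density 0 (sqrt (u - s)) x))) \<and>
     (\<forall>(ts :: nat \<Rightarrow> real) n. 0 \<le> ts 0 \<and> (\<forall>i<n. ts i < ts (Suc i)) \<longrightarrow>
        prob_space.indep_vars M (\<lambda>_. borel)
          (\<lambda>(i, k) \<omega>. (B (ts (Suc i)) \<omega> - B (ts i) \<omega>) $ k) ({..<n} \<times> (UNIV :: 'd set)))"

definition bm_filtration :: "'a measure \<Rightarrow> (real \<Rightarrow> 'a \<Rightarrow> real^'d) \<Rightarrow> real \<Rightarrow> 'a measure" where
  "bm_filtration M B t = sigma (space M)
     {B s -` A \<inter> space M | s A. 0 \<le> s \<and> s \<le> t \<and> A \<in> sets (borel :: (real^'d) measure)}"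

definition predictable_sigma :: "'a measure \<Rightarrow> (real \<Rightarrow> 'a \<Rightarrow> real^'d) \<Rightarrow> real \<Rightarrow> ('a \<times> real) measure" where
  "predictable_sigma M B T = sigma (space M \<times> {0..T})
     ({A \<times> {0} | A. A \<in> sets (bm_filtration M B 0)} \<union>
      {A \<times> {s<..u} | A s u. 0 \<le> s \<and> s \<le> u \<and> u \<le> T \<and> A \<in> sets (bm_filtration M B s)})"

definition L2F :: "'a measure \<Rightarrow> (real \<Rightarrow> 'a \<Rightarrow> real^'d) \<Rightarrow> real \<Rightarrow> ('a \<Rightarrow> real \<Rightarrow> real) \<Rightarrow> bool" where
  "L2F M B T \<phi> \<longleftrightarrow>
     (\<lambda>(\<omega>, t). \<phi> \<omega> t) \<in> borel_measurable (predictable_sigma M B T) \<and>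
     (\<integral>\<^sup>+\<omega>. (\<integral>\<^sup>+t\<in>{0..T}. ennreal ((\<phi> \<omega> t)\<^sup>2) \<partial>lborel) \<partial>M) < \<infinity>"

definition dyadic :: "real \<Rightarrow> nat \<Rightarrow> nat \<Rightarrow> real" where
  "dyadic T n i = real i * T / 2 ^ n"

end

theory Submission
  imports Defs
begin


lemma sq3_ennreal: "(p + q + r :: ennreal)^2 \<le> 3 * (p^2 + q^2 + r^2)"
proof (cases "p = \<top> \<or> q = \<top> \<or> r = \<top>")
  case True then show ?thesis by (auto simp: ennreal_mult_top)
next
  case False
  then obtain a b c where abc: "p = ennreal a" "q = ennreal b" "r = ennreal c" "0 \<le> a" "0 \<le> b" "0 \<le> c"
    by (metis ennreal_cases top.extremum_strict top_greatest)
  have "(a+b+c)^2 \<le> 3*(a^2+b^2+c^2)"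
  proof -
    have "0 \<le> (a-b)^2+(b-c)^2+(a-c)^2" by simp
    then show ?thesis by (simp add: power2_eq_square algebra_simps)
  qed
  then have "ennreal ((a+b+c)^2) \<le> ennreal (3*(a^2+b^2+c^2))" by (rule ennreal_leI)
  moreover have "(p+q+r)^2 = ennreal ((a+b+c)^2)"
  proof -
    have "p+q+r = ennreal (a+b+c)" using abc by simp
    then show ?thesis using abc by (metis ennreal_power add_nonneg_nonneg)
  qed
  moreover have "3 * (p^2 + q^2 + r^2) = ennreal (3*(a^2+b^2+c^2))" using abc
    by (simp add: ennreal_power numeral_mult_ennreal)
  ultimately show ?thesis by simp
qed

lemma CS_interval:
  fixes u :: "real \<Rightarrow> real"
  assumes [measurable]: "u \<in> borel_measurable lborel" and ab: "a \<le> b"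
  shows "(\<integral>\<^sup>+ x. ennreal \<bar>u x\<bar> * indicator {a..b} x \<partial>lborel)^2
     \<le> ennreal (b - a) * (\<integral>\<^sup>+ x. ennreal ((u x)^2) * indicator {a..b} x \<partial>lborel)"
proof -
  have "(\<integral>\<^sup>+ x. (ennreal \<bar>u x\<bar> * indicator {a..b} x) * indicator {a..b} x \<partial>lborel)^2
     \<le> (\<integral>\<^sup>+ x. (ennreal \<bar>u x\<bar> * indicator {a..b} x)^2 \<partial>lborel) * (\<integral>\<^sup>+ x. (indicator {a..b} x :: ennreal)^2 \<partial>lborel)"
    by (rule Cauchy_Schwarz_nn_integral) auto
  moreover have "\<And>x. (ennreal \<bar>u x\<bar> * indicator {a..b} x) * (indicator {a..b} x :: ennreal) = ennreal \<bar>u x\<bar> * indicator {a..b} x"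
    by (auto split: split_indicator)
  moreover have "\<And>x. (ennreal \<bar>u x\<bar> * indicator {a..b} x)^2 = ennreal ((u x)^2) * (indicator {a..b} x :: ennreal)"
    by (auto split: split_indicator simp: ennreal_power)
  moreover have "\<And>x. (indicator {a..b} x :: ennreal)^2 = indicator {a..b} x"
    by (auto split: split_indicator)
  ultimately show ?thesis using ab by (simp add: mult.commute)
qed

lemma interval_est:
  fixes t t' \<mu> K :: real and D gg a :: "real \<Rightarrow> real"
  assumes tt: "t \<le> t'" and mu: "0 \<le> \<mu>" and small: "3 * \<mu>^2 * (t'-t)^2 \<le> 1/2"
    and [measurable]: "D \<in> borel_measurable lborel" "gg \<in> borel_measurable lborel" "a \<in> borel_measurable lborel"
    and Dnn: "\<And>s. 0 \<le> D s"
    and bnd: "\<And>s. s \<in> {t..<t'} \<Longrightarrow> D s \<le> K"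
    and hyp: "\<And>s. s \<in> {t..<t'} \<Longrightarrow> ennreal (D s) \<le> (\<integral>\<^sup>+ r. ennreal \<bar>gg r\<bar> * indicator {t..s} r \<partial>lborel)
          + ennreal \<mu> * (\<integral>\<^sup>+ r. ennreal \<bar>D r\<bar> * indicator {t..s} r \<partial>lborel) + ennreal \<bar>a s\<bar>"
  shows "(\<integral>\<^sup>+ s. ennreal ((D s)^2) * indicator {t..<t'} s \<partial>lborel)
     \<le> ennreal (6*(t'-t)^2) * (\<integral>\<^sup>+ s. ennreal ((gg s)^2) * indicator {t..<t'} s \<partial>lborel)
       + 6 * (\<integral>\<^sup>+ s. ennreal ((a s)^2) * indicator {t..<t'} s \<partial>lborel)"
proof -
  define h where "h = t' - t"
  define I where "I = {t..<t'}"
  define \<Phi> where "\<Phi> = (\<integral>\<^sup>+ s. ennreal ((D s)^2) * indicator I s \<partial>lborel)"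
  define Gi where "Gi = (\<integral>\<^sup>+ s. ennreal ((gg s)^2) * indicator I s \<partial>lborel)"
  define Ai where "Ai = (\<integral>\<^sup>+ s. ennreal ((a s)^2) * indicator I s \<partial>lborel)"
  have h0: "0 \<le> h" using tt by (simp add: h_def)
  have sub: "\<And>s r. s \<in> I \<Longrightarrow> indicator {t..s} r \<le> (indicator I r :: ennreal)"
    by (auto simp: I_def split: split_indicator)
  have Pb: "(\<integral>\<^sup>+ r. ennreal \<bar>gg r\<bar> * indicator {t..s} r \<partial>lborel)^2 \<le> ennreal h * Gi" if s: "s \<in> I" for s
  proof -
    have "(\<integral>\<^sup>+ r. ennreal \<bar>gg r\<bar> * indicator {t..s} r \<partial>lborel)^2
       \<le> ennreal (s - t) * (\<integral>\<^sup>+ r. ennreal ((gg r)^2) * indicator {t..s} r \<partial>lborel)"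
      using s by (intro CS_interval) (auto simp: I_def)
    also have "\<dots> \<le> ennreal h * Gi"
      unfolding Gi_def using s
      by (intro mult_mono nn_integral_mono ennreal_leI) (auto simp: h_def I_def intro!: mult_left_mono sub)
    finally show ?thesis .
  qed
  have Qb: "(\<integral>\<^sup>+ r. ennreal \<bar>D r\<bar> * indicator {t..s} r \<partial>lborel)^2 \<le> ennreal h * \<Phi>" if s: "s \<in> I" for s
  proof -
    have "(\<integral>\<^sup>+ r. ennreal \<bar>D r\<bar> * indicator {t..s} r \<partial>lborel)^2
       \<le> ennreal (s - t) * (\<integral>\<^sup>+ r. ennreal ((D r)^2) * indicator {t..s} r \<partial>lborel)"
      using s by (intro CS_interval) (auto simp: I_def)
    also have "\<dots> \<le> ennreal h * \<Phi>"
      unfolding \<Phi>_def using s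
      by (intro mult_mono nn_integral_mono ennreal_leI) (auto simp: h_def I_def intro!: mult_left_mono sub)
    finally show ?thesis .
  qed
  have pt: "ennreal ((D s)^2) \<le> 3*(ennreal h * Gi) + 3*(ennreal (\<mu>^2) * (ennreal h * \<Phi>)) + 3*ennreal ((a s)^2)"
    if s: "s \<in> I" for s
  proof -
    let ?P = "\<integral>\<^sup>+ r. ennreal \<bar>gg r\<bar> * indicator {t..s} r \<partial>lborel"
    let ?Q = "\<integral>\<^sup>+ r. ennreal \<bar>D r\<bar> * indicator {t..s} r \<partial>lborel"
    have "ennreal ((D s)^2) = (ennreal (D s))^2" using Dnn by (simp add: ennreal_power)
    also have "\<dots> \<le> (?P + ennreal \<mu> * ?Q + ennreal \<bar>a s\<bar>)^2"
      using hyp[of s] s by (intro power_mono) (auto simp: I_def)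
    also have "\<dots> \<le> 3 * (?P^2 + (ennreal \<mu> * ?Q)^2 + (ennreal \<bar>a s\<bar>)^2)" by (rule sq3_ennreal)
    also have "(ennreal \<mu> * ?Q)^2 = ennreal (\<mu>^2) * ?Q^2" using mu by (simp add: power_mult_distrib ennreal_power)
    also have "(ennreal \<bar>a s\<bar>)^2 = ennreal ((a s)^2)" by (simp add: ennreal_power)
    also have "3 * (?P^2 + ennreal (\<mu>^2) * ?Q^2 + ennreal ((a s)^2))
       \<le> 3 * (ennreal h * Gi + ennreal (\<mu>^2) * (ennreal h * \<Phi>) + ennreal ((a s)^2))"
      using Pb[OF s] Qb[OF s] by (intro mult_left_mono add_mono) auto
    finally show ?thesis by (simp add: distrib_left)
  qed
  define X where "X = 3*(ennreal h * Gi) + 3*(ennreal (\<mu>^2) * (ennreal h * \<Phi>))"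
  have "\<Phi> = (\<integral>\<^sup>+ s. ennreal ((D s)^2) * indicator I s \<partial>lborel)" by (simp add: \<Phi>_def)
  also have "\<dots> \<le> (\<integral>\<^sup>+ s. (X + 3*ennreal ((a s)^2)) * indicator I s \<partial>lborel)"
    unfolding X_def using pt by (intro nn_integral_mono) (auto split: split_indicator)
  also have "\<dots> = (\<integral>\<^sup>+ s. X * indicator I s + 3 * (ennreal ((a s)^2) * indicator I s) \<partial>lborel)"
    by (intro nn_integral_cong) (simp add: distrib_right mult.assoc)
  also have "\<dots> = X * ennreal h + 3 * Ai"
    using tt by (subst nn_integral_add) (auto simp: nn_integral_cmult I_def h_def Ai_def)
  finally have main: "\<Phi> \<le> X * ennreal h + 3 * Ai" .
  have fin: "\<Phi> \<le> ennreal (K^2) * ennreal h"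
  proof -
    have "\<Phi> \<le> (\<integral>\<^sup>+ s. ennreal (K^2) * indicator I s \<partial>lborel)"
      unfolding \<Phi>_def using bnd Dnn
      by (intro nn_integral_mono) (auto simp: I_def split: split_indicator intro!: ennreal_leI power_mono)
    also have "\<dots> = ennreal (K^2) * ennreal h" using tt by (simp add: I_def h_def nn_integral_cmult_indicator)
    finally show ?thesis .
  qed
  have "\<Phi> \<noteq> \<top>"
  proof
    assume "\<Phi> = \<top>"
    with fin have "\<top> \<le> ennreal (K^2 * h)" using h0 by (simp add: ennreal_mult)
    then show False by (simp add: top_unique)
  qed
  then obtain \<phi> where \<phi>: "\<Phi> = ennreal \<phi>" "0 \<le> \<phi>" by (cases \<Phi>) auto
  show ?thesis
  proof (cases "h = 0")
    case True
    then have "I = {}" using tt by (auto simp: I_def h_def)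
    then have "\<Phi> = 0" by (simp add: \<Phi>_def)
    then show ?thesis by (simp add: \<Phi>_def I_def)
  next
    case False
    then have hp: "0 < h" using h0 by simp
    show ?thesis
    proof (cases "Gi = \<top> \<or> Ai = \<top>")
      case True
      then show ?thesis using hp
        by (auto simp: Gi_def Ai_def I_def h_def ennreal_mult_top ennreal_top_mult)
    next
      case False
      then obtain gi ai where ga: "Gi = ennreal gi" "Ai = ennreal ai" "0 \<le> gi" "0 \<le> ai"
        by (metis ennreal_cases)
      have eq: "X * ennreal h + 3 * Ai = ennreal (3*(h*gi)*h + 3*(\<mu>^2*(h*\<phi>))*h + 3*ai)"
        unfolding X_def \<phi> ga using h0 \<phi>(2) ga(3,4)
        by (simp add: ennreal_mult' distrib_right distrib_left zero_le_mult_iff ac_simps)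
      have "ennreal \<phi> \<le> ennreal (3*(h*gi)*h + 3*(\<mu>^2*(h*\<phi>))*h + 3*ai)"
        using main eq \<phi> by simp
      then have r: "\<phi> \<le> 3*(h*gi)*h + 3*(\<mu>^2*(h*\<phi>))*h + 3*ai"
        using h0 \<phi>(2) ga(3,4) by (subst (asm) ennreal_le_iff) auto
      have "3*(\<mu>^2*(h*\<phi>))*h = (3*\<mu>^2*h^2) * \<phi>" by (simp add: power2_eq_square algebra_simps)
      also have "\<dots> \<le> (1/2) * \<phi>" using small \<phi>(2) unfolding h_def by (intro mult_right_mono) auto
      finally have "\<phi> \<le> 6*h^2*gi + 6*ai" using r by (simp add: power2_eq_square algebra_simps)
      then have "ennreal \<phi> \<le> ennreal (6*h^2*gi + 6*ai)" by (rule ennreal_leI)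
      also have "\<dots> = ennreal (6*h^2) * ennreal gi + 6 * ennreal ai"
        using ga(3,4) h0 by (simp add: ennreal_mult')
      finally show ?thesis using \<phi> ga unfolding \<Phi>_def Gi_def Ai_def I_def h_def by simp
    qed
  qed
qed



lemma bm_filtration_sub:
  fixes B :: "real \<Rightarrow> 'a \<Rightarrow> real^'d"
  assumes Bm: "\<And>t. B t \<in> borel_measurable M"
  shows "sets (bm_filtration M B t) \<subseteq> sets M"
proof -
  let ?C = "{B s -` A \<inter> space M | s A. 0 \<le> s \<and> s \<le> t \<and> A \<in> sets borel}"
  have C: "?C \<subseteq> Pow (space M)" by auto
  have "?C \<subseteq> sets M" using Bm by (auto intro: measurable_sets)
  then have "sigma_sets (space M) ?C \<subseteq> sets M" by (rule sets.sigma_sets_subset)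
  then show ?thesis unfolding bm_filtration_def using C by (simp add: sets_measure_of)
qed

lemma predictable_meas:
  fixes \<phi> :: "'a \<Rightarrow> real \<Rightarrow> real" and B :: "real \<Rightarrow> 'a \<Rightarrow> real^'d"
  assumes Bm: "\<And>t. B t \<in> borel_measurable M" and T: "0 \<le> T"
    and \<phi>: "(\<lambda>(\<omega>, t). \<phi> \<omega> t) \<in> borel_measurable (predictable_sigma M B T)"
  shows "(\<lambda>(\<omega>, t). \<phi> \<omega> t * indicator {0..T} t) \<in> borel_measurable (M \<Otimes>\<^sub>M lborel)"
proof -
  let ?\<Omega> = "space M \<times> {0..T}"
  let ?G = "{A \<times> {0} | A. A \<in> sets (bm_filtration M B 0)} \<union>
      {A \<times> {s<..u} | A s u. 0 \<le> s \<and> s \<le> u \<and> u \<le> T \<and> A \<in> sets (bm_filtration M B s)}"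
  let ?R = "restrict_space (M \<Otimes>\<^sub>M lborel) ?\<Omega>"
  have \<Omega>0: "?\<Omega> \<in> sets (M \<Otimes>\<^sub>M lborel)" by (intro pair_measureI sets.top) simp
  have \<Omega>eq: "?\<Omega> \<inter> space (M \<Otimes>\<^sub>M lborel) = ?\<Omega>" by (simp add: space_pair_measure Times_Int_Times)
  have \<Omega>: "?\<Omega> \<inter> space (M \<Otimes>\<^sub>M lborel) \<in> sets (M \<Otimes>\<^sub>M lborel)"
    unfolding \<Omega>eq by (rule \<Omega>0)
  have sub: "\<And>s. sets (bm_filtration M B s) \<subseteq> sets M" by (rule bm_filtration_sub[OF Bm])
  have GX: "X \<subseteq> ?\<Omega> \<and> X \<in> sets (M \<Otimes>\<^sub>M lborel)" if X: "X \<in> ?G" for X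
  proof -
    from X have "(\<exists>A. X = A \<times> {0} \<and> A \<in> sets (bm_filtration M B 0)) \<or>
      (\<exists>A s u. X = A \<times> {s<..u} \<and> 0 \<le> s \<and> s \<le> u \<and> u \<le> T \<and> A \<in> sets (bm_filtration M B s))"
      by (simp only: Un_iff mem_Collect_eq)
    then show ?thesis
    proof (elim disjE exE conjE)
      fix A assume a: "X = A \<times> {0}" "A \<in> sets (bm_filtration M B 0)"
      then have A: "A \<in> sets M" using sub by blast
      show ?thesis using a T sets.sets_into_space[OF A] A by (auto intro!: pair_measureI)
    next
      fix A s u assume b: "X = A \<times> {s<..u}" "0 \<le> s" "s \<le> u" "u \<le> T" "A \<in> sets (bm_filtration M B s)"
      then have A: "A \<in> sets M" using sub by blast
      show ?thesis using b sets.sets_into_space[OF A] A by (auto intro!: pair_measureI)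
    qed
  qed
  have G: "?G \<subseteq> Pow ?\<Omega>" using GX by blast
  have spR: "space ?R = ?\<Omega>" unfolding space_restrict_space by (rule \<Omega>eq)
  have "?G \<subseteq> sets ?R"
  proof
    fix X assume "X \<in> ?G"
    then have "X \<subseteq> ?\<Omega> \<and> X \<in> sets (M \<Otimes>\<^sub>M lborel)" by (rule GX)
    then show "X \<in> sets ?R" unfolding sets_restrict_space_iff[OF \<Omega>] .
  qed
  then have "sigma_sets (space ?R) ?G \<subseteq> sets ?R" by (rule sets.sigma_sets_subset)
  then have ss: "sets (predictable_sigma M B T) \<subseteq> sets ?R"
    unfolding predictable_sigma_def sets_measure_of[OF G] spR .
  have sp: "space (predictable_sigma M B T) = space ?R"
    unfolding predictable_sigma_def space_measure_of[OF G] spR ..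
  have "(\<lambda>(\<omega>, t). \<phi> \<omega> t) \<in> borel_measurable ?R"
    using measurable_mono[of borel borel, OF order_refl refl ss sp] \<phi> by blast
  then have "(\<lambda>x. indicator ?\<Omega> x *\<^sub>R (case x of (\<omega>, t) \<Rightarrow> \<phi> \<omega> t)) \<in> borel_measurable (M \<Otimes>\<^sub>M lborel)"
    using borel_measurable_restrict_space_iff[OF \<Omega>] by blast
  then show ?thesis
    by (rule measurable_cong[THEN iffD1, rotated])
       (auto simp: space_pair_measure indicator_def)
qed

lemma ceil_div_bounds:
  fixes c x :: real assumes c: "0 < c"
  shows "x \<le> real_of_int \<lceil>c*x\<rceil> / c" "real_of_int \<lceil>c*x\<rceil> / c \<le> x + 1/c"
proof -
  show "x \<le> real_of_int \<lceil>c*x\<rceil> / c"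
    using le_of_int_ceiling[of "c*x"] c by (simp add: pos_le_divide_eq mult.commute)
  have "real_of_int \<lceil>c*x\<rceil> \<le> c*x + 1" using ceiling_correct[of "c*x"] by linarith
  then have "real_of_int \<lceil>c*x\<rceil> / c \<le> (c*x+1)/c" using c by (intro divide_right_mono) auto
  also have "(c*x+1)/c = x + 1/c" using c by (simp add: add_divide_distrib)
  finally show "real_of_int \<lceil>c*x\<rceil> / c \<le> x + 1/c" .
qed

lemma B_joint:
  fixes B :: "real \<Rightarrow> 'a \<Rightarrow> real^'d"
  assumes Bm: "\<And>t. B t \<in> borel_measurable M"
    and cont: "\<And>\<omega>. \<omega> \<in> space M \<Longrightarrow> continuous_on {0..} (\<lambda>t. B t \<omega>)"
  shows "(\<lambda>p. B (max 0 (snd p)) (fst p)) \<in> borel_measurable (M \<Otimes>\<^sub>M (lborel :: real measure))"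
proof (rule borel_measurable_LIMSEQ_metric)
  fix k :: nat
  let ?c = "real (Suc k)"
  show "(\<lambda>p. B (real_of_int \<lceil>?c * max 0 (snd p)\<rceil> / ?c) (fst p)) \<in> borel_measurable (M \<Otimes>\<^sub>M lborel)"
  proof (rule measurable_compose_countable[where f="\<lambda>j p. B (real_of_int j / ?c) (fst p)"])
    show "\<And>j::int. (\<lambda>p. B (real_of_int j / ?c) (fst p)) \<in> borel_measurable (M \<Otimes>\<^sub>M lborel)"
      using Bm by (intro measurable_compose[OF measurable_fst]) auto
    show "(\<lambda>p. \<lceil>?c * max 0 (snd p)\<rceil>) \<in> measurable (M \<Otimes>\<^sub>M lborel) (count_space UNIV)"
      by (rule measurable_compose[OF _ measurable_real_ceiling]) simp
  qed
next
  fix p :: "'a \<times> real" assume p: "p \<in> space (M \<Otimes>\<^sub>M lborel)"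
  let ?x = "max 0 (snd p)"
  have x0: "0 \<le> ?x" by simp
  have q: "(\<lambda>k. real_of_int \<lceil>real (Suc k) * ?x\<rceil> / real (Suc k)) \<longlonglongrightarrow> ?x"
  proof (rule tendsto_sandwich[of "\<lambda>k. ?x" _ _ "\<lambda>k. ?x + 1 / real (Suc k)"])
    show "\<forall>\<^sub>F k in sequentially. ?x \<le> real_of_int \<lceil>real (Suc k) * ?x\<rceil> / real (Suc k)"
      by (intro always_eventually allI ceil_div_bounds(1)) simp
    show "\<forall>\<^sub>F k in sequentially. real_of_int \<lceil>real (Suc k) * ?x\<rceil> / real (Suc k) \<le> ?x + 1 / real (Suc k)"
      by (intro always_eventually allI ceil_div_bounds(2)) simp
    show "(\<lambda>k. ?x) \<longlonglongrightarrow> ?x" by simp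
    show "(\<lambda>k. ?x + 1 / real (Suc k)) \<longlonglongrightarrow> ?x"
      using tendsto_add[OF tendsto_const[of ?x] LIMSEQ_inverse_real_of_nat] by (simp add: inverse_eq_divide)
  qed
  have inS: "\<forall>\<^sub>F k in sequentially. real_of_int \<lceil>real (Suc k) * ?x\<rceil> / real (Suc k) \<in> {0..}"
  proof (intro always_eventually allI)
    fix k
    have "?x \<le> real_of_int \<lceil>real (Suc k) * ?x\<rceil> / real (Suc k)" by (rule ceil_div_bounds(1)) simp
    then show "real_of_int \<lceil>real (Suc k) * ?x\<rceil> / real (Suc k) \<in> {0..}"
      using x0 unfolding atLeast_iff by linarith
  qed
  from p have "fst p \<in> space M" by (auto simp: space_pair_measure)
  from continuous_on_tendsto_compose[OF cont[OF this] q _ inS]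
  show "(\<lambda>k. B (real_of_int \<lceil>real (Suc k) * max 0 (snd p)\<rceil> / real (Suc k)) (fst p)) \<longlonglongrightarrow> B (max 0 (snd p)) (fst p)"
    by simp
qed



lemma dyadic_unique:
  assumes T: "0 < T" and si: "s \<in> {dyadic T n i..<dyadic T n (Suc i)}"
    and sj: "s \<in> {dyadic T n j..<dyadic T n (Suc j)}"
  shows "i = j"
proof -
  define c where "c = T / 2^n"
  have c: "0 < c" using T by (simp add: c_def)
  have d: "\<And>k. dyadic T n k = real k * c" by (simp add: dyadic_def c_def)
  from si sj have "real i * c < real (Suc j) * c" "real j * c < real (Suc i) * c"
    unfolding d by auto
  then have "real i < real (Suc j)" "real j < real (Suc i)"
    using c by (auto simp: mult_less_cancel_right)
  then show ?thesis by simp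
qed

lemma dyadic_exists:
  assumes T: "0 < T" and s: "0 \<le> s" "s < T"
  shows "\<exists>i<2^n. s \<in> {dyadic T n i..<dyadic T n (Suc i)}"
proof -
  define c where "c = T / 2^n"
  have c: "0 < c" using T by (simp add: c_def)
  have d: "\<And>k. dyadic T n k = real k * c" by (simp add: dyadic_def c_def)
  define i where "i = nat \<lfloor>s / c\<rfloor>"
  have f0: "0 \<le> \<lfloor>s / c\<rfloor>" using s c by simp
  have ri: "real i = of_int \<lfloor>s / c\<rfloor>" using f0 by (simp add: i_def)
  have "real i \<le> s / c" using ri by simp
  then have lo: "real i * c \<le> s" using c by (simp add: pos_le_divide_eq)
  have "s / c < real i + 1" using ri by linarith
  then have hi: "s < (real i + 1) * c" using c by (simp add: pos_divide_less_eq)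
  have "real i * c < T" using lo s by linarith
  then have "real i < 2^n" using c T by (simp add: c_def field_simps)
  then have "i < 2^n"
    by (metis of_nat_less_iff of_nat_numeral of_nat_power)
  moreover have "s \<in> {dyadic T n i..<dyadic T n (Suc i)}"
    using lo hi unfolding d by (simp add: algebra_simps)
  ultimately show ?thesis by blast
qed

lemma sum_dyadic_ind:
  fixes F :: "nat \<Rightarrow> 'b::semiring_1"
  assumes T: "0 < T" and i: "i < 2^n" and s: "s \<in> {dyadic T n i..<dyadic T n (Suc i)}"
  shows "(\<Sum>j<2^n. F j * indicator {dyadic T n j..<dyadic T n (Suc j)} s) = F i"
proof -
  have "(\<Sum>j<2^n. F j * indicator {dyadic T n j..<dyadic T n (Suc j)} s) = (\<Sum>j<2^n. if j = i then F j else 0)"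
  proof (rule sum.cong)
    fix j :: nat assume "j \<in> {..<2^n}"
    show "F j * indicator {dyadic T n j..<dyadic T n (Suc j)} s = (if j = i then F j else 0)"
    proof (cases "j = i")
      case True then show ?thesis using s by simp
    next
      case False
      then have "s \<notin> {dyadic T n j..<dyadic T n (Suc j)}" using dyadic_unique[OF T s] by blast
      then show ?thesis using False by simp
    qed
  qed simp
  also have "\<dots> = F i" using i by simp
  finally show ?thesis .
qed

lemma sum_dyadic_ind_le1:
  assumes T: "0 < T"
  shows "(\<Sum>j<2^n. indicator {dyadic T n j..<dyadic T n (Suc j)} s :: ennreal) \<le> 1"
proof (cases "\<exists>i<2^n. s \<in> {dyadic T n i..<dyadic T n (Suc i)}")
  case True
  then obtain i where i: "i < 2^n" "s \<in> {dyadic T n i..<dyadic T n (Suc i)}" by blast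
  have "(\<Sum>j<2^n. 1 * indicator {dyadic T n j..<dyadic T n (Suc j)} s :: ennreal) = 1"
    using sum_dyadic_ind[OF T i, of "\<lambda>_. 1 :: ennreal"] by simp
  then show ?thesis by simp
next
  case False
  then have "(\<Sum>j<2^n. indicator {dyadic T n j..<dyadic T n (Suc j)} s :: ennreal) = 0"
    by (intro sum.neutral) auto
  then show ?thesis by simp
qed

lemma set_nn_abs:
  fixes F :: "real \<Rightarrow> real"
  assumes "set_integrable lborel A F"
  shows "ennreal (LINT r:A|lborel. \<bar>F r\<bar>) = (\<integral>\<^sup>+ r. ennreal \<bar>F r\<bar> * indicator A r \<partial>lborel)"
proof -
  have "set_integrable lborel A (\<lambda>r. norm (F r))" by (rule set_integrable_norm[OF assms])
  then have int: "integrable lborel (\<lambda>r. indicator A r *\<^sub>R \<bar>F r\<bar>)" by (simp add: set_integrable_def)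
  have "(\<integral>\<^sup>+ r. ennreal (indicator A r *\<^sub>R \<bar>F r\<bar>) \<partial>lborel) = ennreal (integral\<^sup>L lborel (\<lambda>r. indicator A r *\<^sub>R \<bar>F r\<bar>))"
    by (rule nn_integral_eq_integral[OF int]) auto
  moreover have "(\<integral>\<^sup>+ r. ennreal (indicator A r *\<^sub>R \<bar>F r\<bar>) \<partial>lborel) = (\<integral>\<^sup>+ r. ennreal \<bar>F r\<bar> * indicator A r \<partial>lborel)"
    by (intro nn_integral_cong) (auto split: split_indicator)
  ultimately show ?thesis by (simp add: set_lebesgue_integral_def)
qed

lemma normal_sq:
  assumes D: "distributed M lborel X (\<lambda>x. ennreal (normal_density 0 \<sigma> x))" and \<sigma>: "0 < \<sigma>"
  shows "(\<integral>\<^sup>+\<omega>. ennreal ((X \<omega>)^2) \<partial>M) = ennreal (\<sigma>^2)"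
proof -
  have "(\<integral>\<^sup>+\<omega>. ennreal ((X \<omega>)^2) \<partial>M) = (\<integral>\<^sup>+x. ennreal (normal_density 0 \<sigma> x) * ennreal (x^2) \<partial>lborel)"
    using distributed_nn_integral[OF D, of "\<lambda>x. ennreal (x^2)"] by simp
  also have "\<dots> = (\<integral>\<^sup>+x. ennreal (normal_density 0 \<sigma> x * (x - 0)^(2*1)) \<partial>lborel)"
    by (intro nn_integral_cong) (simp add: ennreal_mult)
  also have "\<dots> = ennreal (integral\<^sup>L lborel (\<lambda>x. normal_density 0 \<sigma> x * (x - 0)^(2*1)))"
    using \<sigma> by (intro nn_integral_eq_integral[OF integrable_normal_moment]) auto
  also have "integral\<^sup>L lborel (\<lambda>x. normal_density 0 \<sigma> x * (x - 0)^(2*1)) = \<sigma>^2"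
  proof -
    have f2: "fact 2 = (2::real)" by (simp add: numeral_2_eq_2)
    have "integral\<^sup>L lborel (\<lambda>x. normal_density 0 \<sigma> x * (x - 0)^(2*1)) = fact (2*1) / ((2 / \<sigma>^2)^1 * fact 1)"
      by (rule integral_normal_moment_even) (rule \<sigma>)
    also have "\<dots> = 2 / (2 / \<sigma>^2)" using f2 by simp
    also have "\<dots> = \<sigma>^2" using \<sigma> by simp
    finally show ?thesis .
  qed
  finally show ?thesis .
qed

lemma E_inc_sq:
  fixes B :: "real \<Rightarrow> 'a \<Rightarrow> real^'d" and z :: "real^'d"
  assumes dist: "\<And>s u k. 0 \<le> s \<Longrightarrow> s < u \<Longrightarrow>
        distributed M lborel (\<lambda>\<omega>. (B u \<omega> - B s \<omega>) $ k) (\<lambda>x. ennreal (normal_density 0 (sqrt (u - s)) x))"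
    and t: "0 \<le> t" "t \<le> s"
  shows "(\<integral>\<^sup>+\<omega>. ennreal ((z \<bullet> (B s \<omega> - B t \<omega>))^2) \<partial>M) \<le> ennreal ((norm z)^2 * real CARD('d) * (s - t))"
proof (cases "s = t")
  case True then show ?thesis by simp
next
  case False
  then have ts: "t < s" using t by simp
  have meas: "\<And>k. (\<lambda>\<omega>. (B s \<omega> - B t \<omega>) $ k) \<in> borel_measurable M"
    using distributed_measurable[OF dist[OF t(1) ts]] by simp
  have "(\<integral>\<^sup>+\<omega>. ennreal ((z \<bullet> (B s \<omega> - B t \<omega>))^2) \<partial>M)
      \<le> (\<integral>\<^sup>+\<omega>. ennreal ((norm z)^2) * (\<Sum>k\<in>UNIV. ennreal (((B s \<omega> - B t \<omega>) $ k)^2)) \<partial>M)"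
  proof (intro nn_integral_mono)
    fix \<omega>
    let ?v = "B s \<omega> - B t \<omega>"
    have "(z \<bullet> ?v)^2 \<le> (norm z * norm ?v)^2"
      using Cauchy_Schwarz_ineq2[of z ?v] by (metis abs_ge_zero power2_abs power_mono)
    also have "\<dots> = (norm z)^2 * (norm ?v)^2" by (rule power_mult_distrib)
    also have "(norm ?v)^2 = (\<Sum>k\<in>UNIV. (?v $ k)^2)"
      unfolding power2_norm_eq_inner inner_vec_def by (simp add: power2_eq_square)
    finally have "ennreal ((z \<bullet> ?v)^2) \<le> ennreal ((norm z)^2 * (\<Sum>k\<in>UNIV. (?v $ k)^2))"
      by (rule ennreal_leI)
    also have "\<dots> = ennreal ((norm z)^2) * (\<Sum>k\<in>UNIV. ennreal ((?v $ k)^2))"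
      by (simp add: ennreal_mult sum_nonneg)
    finally show "ennreal ((z \<bullet> ?v)^2) \<le> ennreal ((norm z)^2) * (\<Sum>k\<in>UNIV. ennreal ((?v $ k)^2))" .
  qed
  also have "\<dots> = ennreal ((norm z)^2) * (\<integral>\<^sup>+\<omega>. (\<Sum>k\<in>UNIV. ennreal (((B s \<omega> - B t \<omega>) $ k)^2)) \<partial>M)"
  proof (rule nn_integral_cmult)
    show "(\<lambda>\<omega>. \<Sum>k\<in>UNIV. ennreal (((B s \<omega> - B t \<omega>) $ k)^2)) \<in> borel_measurable M"
      by (intro borel_measurable_sum measurable_compose[OF meas]) simp
  qed
  also have "(\<integral>\<^sup>+\<omega>. (\<Sum>k\<in>UNIV. ennreal (((B s \<omega> - B t \<omega>) $ k)^2)) \<partial>M)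
      = (\<Sum>k\<in>UNIV. \<integral>\<^sup>+\<omega>. ennreal (((B s \<omega> - B t \<omega>) $ k)^2) \<partial>M)"
    by (rule nn_integral_sum) (intro measurable_compose[OF meas], simp)
  also have "ennreal ((norm z)^2) * (\<Sum>k\<in>UNIV. \<integral>\<^sup>+\<omega>. ennreal (((B s \<omega> - B t \<omega>) $ k)^2) \<partial>M)
      = ennreal ((norm z)^2) * (\<Sum>k\<in>(UNIV::'d set). ennreal (s - t))"
    using normal_sq[OF dist[OF t(1) ts]] ts by simp
  also have "\<dots> = ennreal ((norm z)^2 * real CARD('d) * (s - t))"
    using ts by (simp add: ennreal_mult ennreal_of_nat_eq_real_of_nat mult.assoc)
  finally show ?thesis .
qed



theorem lemma5p2:
  fixes M :: "'a measure" and B :: "real \<Rightarrow> 'a \<Rightarrow> real^'d" and T \<mu> :: real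
    and f :: "'a \<Rightarrow> real \<Rightarrow> real \<Rightarrow> real^'d \<Rightarrow> real"
    and Y :: "real \<Rightarrow> real \<Rightarrow> real^'d \<Rightarrow> 'a \<Rightarrow> real \<Rightarrow> real"
  assumes BM: "brownian_motion M B"
    and T: "T > 0"
    and f_L2: "\<And>y z. L2F M B T (\<lambda>\<omega> t. f \<omega> t y z)"
    and f_lip: "\<And>\<omega> t y y' z z'. \<omega> \<in> space M \<Longrightarrow> t \<in> {0..T} \<Longrightarrow>
                  \<bar>f \<omega> t y z - f \<omega> t y' z'\<bar> \<le> \<mu> * (\<bar>y - y'\<bar> + norm (z - z'))"
    and Y_meas: "\<And>t y z. t \<in> {0..T} \<Longrightarrow>
                  (\<lambda>(\<omega>, s). Y t y z \<omega> s) \<in> borel_measurable (M \<Otimes>\<^sub>M restrict_space lborel {t..T})"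
    and Y_sol: "\<And>t y z. t \<in> {0..T} \<Longrightarrow>
                  AE \<omega> in M. \<forall>s\<in>{t..T}.
                    set_integrable lborel {t..s} (\<lambda>r. f \<omega> r (Y t y z \<omega> r) z) \<and>
                    Y t y z \<omega> s = y - set_lebesgue_integral lborel {t..s} (\<lambda>r. f \<omega> r (Y t y z \<omega> r) z)
                                    + z \<bullet> (B s \<omega> - B t \<omega>)"
  defines "fn \<equiv> \<lambda>n \<omega> s y z. \<Sum>i<2^n. f \<omega> s (Y (dyadic T n i) y z \<omega> s) z
                                    * indicator {dyadic T n i..<dyadic T n (Suc i)} s"
  shows "(\<lambda>n. \<integral>\<^sup>+\<omega>. (\<integral>\<^sup>+s\<in>{0..T}. ennreal ((fn n \<omega> s y z - f \<omega> s y z)\<^sup>2) \<partial>lborel) \<partial>M)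
           \<longlonglongrightarrow> 0"
proof -
  have ps: "prob_space M" and Bm: "\<And>t. B t \<in> borel_measurable M"
    and cont: "\<And>\<omega>. \<omega> \<in> space M \<Longrightarrow> continuous_on {0..} (\<lambda>t. B t \<omega>)"
    and dist: "\<And>s u k. 0 \<le> s \<Longrightarrow> s < u \<Longrightarrow>
        distributed M lborel (\<lambda>\<omega>. (B u \<omega> - B s \<omega>) $ k) (\<lambda>x. ennreal (normal_density 0 (sqrt (u - s)) x))"
    using BM unfolding brownian_motion_def by auto
  interpret P: prob_space M by (rule ps)
  have mu0: "0 \<le> \<mu>"
  proof -
    obtain \<omega> where \<omega>: "\<omega> \<in> space M" using P.not_empty by blast
    have t0: "(0::real) \<in> {0..T}" using T by simp
    have "\<bar>f \<omega> 0 1 z - f \<omega> 0 0 z\<bar> \<le> \<mu> * (\<bar>1 - 0\<bar> + norm (z - z))"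
      by (rule f_lip[OF \<omega> t0])
    then show ?thesis by simp
  qed
  define g where "g = (\<lambda>\<omega> s. f \<omega> s y z)"
  define gg where "gg = (\<lambda>\<omega> s. g \<omega> s * indicator {0..T} s)"
  have ggj: "(\<lambda>(\<omega>, s). gg \<omega> s) \<in> borel_measurable (M \<Otimes>\<^sub>M lborel)"
    unfolding gg_def
    by (rule predictable_meas[OF Bm]) (use T f_L2[of y z] in \<open>auto simp: L2F_def g_def\<close>)
  have ggj': "(\<lambda>p. gg (fst p) (snd p)) \<in> borel_measurable (M \<Otimes>\<^sub>M lborel)"
    using ggj by (simp add: split_beta')
  have ggs: "gg \<omega> \<in> borel_measurable lborel" if "\<omega> \<in> space M" for \<omega>
    using measurable_Pair2[OF ggj that] by simp
  define G where "G = (\<lambda>\<omega>. \<integral>\<^sup>+ s. ennreal ((g \<omega> s)^2) * indicator {0..T} s \<partial>lborel)"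
  have G_gg: "G \<omega> = (\<integral>\<^sup>+ s. ennreal ((gg \<omega> s)^2) \<partial>lborel)" for \<omega>
    unfolding G_def gg_def by (intro nn_integral_cong) (auto split: split_indicator)
  have Gm: "G \<in> borel_measurable M"
  proof -
    have "(\<lambda>p. ennreal ((gg (fst p) (snd p))^2)) \<in> borel_measurable (M \<Otimes>\<^sub>M lborel)"
      by (rule measurable_compose[OF ggj']) measurable
    then have "(\<lambda>x. \<integral>\<^sup>+ s. ennreal ((gg x s)^2) \<partial>lborel) \<in> borel_measurable M"
      by (intro lborel.borel_measurable_nn_integral) (simp add: split_beta')
    then show ?thesis unfolding G_gg[abs_def] .
  qed
  have "(\<integral>\<^sup>+\<omega>. G \<omega> \<partial>M) < \<infinity>"
    using f_L2[of y z] unfolding L2F_def G_def g_def by simp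
  then obtain eg where eg: "(\<integral>\<^sup>+\<omega>. G \<omega> \<partial>M) = ennreal eg" "0 \<le> eg"
    by (cases "(\<integral>\<^sup>+\<omega>. G \<omega> \<partial>M)") auto
  define h where "h = (\<lambda>n::nat. T / 2^n)"
  have hpos: "0 < h n" for n using T by (simp add: h_def)
  have dy: "dyadic T n i = real i * h n" for n i by (simp add: dyadic_def h_def)
  have dySuc: "dyadic T n (Suc i) - dyadic T n i = h n" for n i by (simp add: dy algebra_simps)
  have dy0: "0 \<le> dyadic T n i" for n i using hpos[of n] by (simp add: dy)
  have dyle: "dyadic T n i \<le> T" if "i \<le> 2^n" for n i
  proof -
    have "real i \<le> 2^n" using that by (metis of_nat_le_iff of_nat_numeral of_nat_power)
    then have "real i * h n \<le> 2^n * h n" using hpos[of n] by (intro mult_right_mono) auto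
    also have "2^n * h n = T" by (simp add: h_def)
    finally show ?thesis by (simp add: dy)
  qed
  have h2n: "2^n * h n = T" for n by (simp add: h_def)
  define I where "I = (\<lambda>n i. {dyadic T n i..<dyadic T n (Suc i)})"
  have Bj: "(\<lambda>p. B (max 0 (snd p)) (fst p)) \<in> borel_measurable (M \<Otimes>\<^sub>M lborel)"
    by (rule B_joint[OF Bm cont])
  define a where "a = (\<lambda>n i \<omega> s. z \<bullet> (B (max 0 s) \<omega> - B (dyadic T n i) \<omega>))"
  have aj0: "(\<lambda>p. a n i (fst p) (snd p)) \<in> borel_measurable (M \<Otimes>\<^sub>M lborel)" for n i
  proof -
    have "(\<lambda>p. B (dyadic T n i) (fst p)) \<in> borel_measurable (M \<Otimes>\<^sub>M lborel)"
      by (rule measurable_compose[OF measurable_fst Bm])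
    then show ?thesis unfolding a_def using Bj by measurable
  qed
  have aj: "(\<lambda>(\<omega>, s). ennreal ((a n i \<omega> s)^2) * indicator (I n i) s) \<in> borel_measurable (M \<Otimes>\<^sub>M lborel)" for n i
  proof -
    have "(\<lambda>p. ennreal ((a n i (fst p) (snd p))^2) * indicator (I n i) (snd p)) \<in> borel_measurable (M \<Otimes>\<^sub>M lborel)"
      using aj0[of n i] unfolding I_def by measurable
    then show ?thesis by (simp add: split_beta')
  qed
  have as: "a n i \<omega> \<in> borel_measurable lborel" if "\<omega> \<in> space M" for n i \<omega>
    using measurable_Pair2[OF aj0 that] by simp
  define W where "W = (\<lambda>n \<omega>. \<Sum>i<2^n. \<integral>\<^sup>+ s. ennreal ((a n i \<omega> s)^2) * indicator (I n i) s \<partial>lborel)"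
  have Wm: "W n \<in> borel_measurable M" for n
    unfolding W_def
    by (intro borel_measurable_sum lborel.borel_measurable_nn_integral aj)
  have EW: "(\<integral>\<^sup>+\<omega>. W n \<omega> \<partial>M) \<le> ennreal ((norm z)^2 * real CARD('d) * T * h n)" for n
  proof -
    define c where "c = (norm z)^2 * real CARD('d)"
    have c0: "0 \<le> c" by (simp add: c_def)
    interpret PS: pair_sigma_finite M lborel
      unfolding pair_sigma_finite_def using prob_space_imp_sigma_finite[OF ps] lborel.sigma_finite_measure_axioms by simp
    have term_le: "(\<integral>\<^sup>+\<omega>. (\<integral>\<^sup>+ s. ennreal ((a n i \<omega> s)^2) * indicator (I n i) s \<partial>lborel) \<partial>M)
        \<le> ennreal (c * h n) * ennreal (h n)" for i
    proof -
      have "(\<integral>\<^sup>+\<omega>. (\<integral>\<^sup>+ s. ennreal ((a n i \<omega> s)^2) * indicator (I n i) s \<partial>lborel) \<partial>M)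
          = (\<integral>\<^sup>+ s. (\<integral>\<^sup>+\<omega>. ennreal ((a n i \<omega> s)^2) * indicator (I n i) s \<partial>M) \<partial>lborel)"
        by (rule PS.Fubini'[symmetric]) (rule aj)
      also have "\<dots> \<le> (\<integral>\<^sup>+ s. ennreal (c * h n) * indicator (I n i) s \<partial>lborel)"
      proof (intro nn_integral_mono)
        fix s
        show "(\<integral>\<^sup>+\<omega>. ennreal ((a n i \<omega> s)^2) * indicator (I n i) s \<partial>M) \<le> ennreal (c * h n) * indicator (I n i) s"
        proof (cases "s \<in> I n i")
          case True
          then have s: "dyadic T n i \<le> s" "s < dyadic T n i + h n"
            using dySuc[of n i] by (auto simp: I_def)
          then have s0: "0 \<le> s" using dy0[of n i] by linarith
          have "(\<integral>\<^sup>+\<omega>. ennreal ((a n i \<omega> s)^2) * indicator (I n i) s \<partial>M)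
              = (\<integral>\<^sup>+\<omega>. ennreal ((z \<bullet> (B s \<omega> - B (dyadic T n i) \<omega>))^2) \<partial>M)"
            using True s0 by (simp add: a_def)
          also have "\<dots> \<le> ennreal ((norm z)^2 * real CARD('d) * (s - dyadic T n i))"
            by (rule E_inc_sq[OF dist dy0 s(1)])
          also have "\<dots> \<le> ennreal (c * h n)"
            using s c0 by (intro ennreal_leI) (simp add: c_def mult_left_mono)
          finally show ?thesis using True by simp
        qed simp
      qed
      also have "\<dots> = ennreal (c * h n) * ennreal (h n)"
        using hpos[of n] dySuc[of n i] by (simp add: I_def nn_integral_cmult_indicator)
      finally show ?thesis .
    qed
    have "(\<integral>\<^sup>+\<omega>. W n \<omega> \<partial>M) = (\<Sum>i<2^n. \<integral>\<^sup>+\<omega>. (\<integral>\<^sup>+ s. ennreal ((a n i \<omega> s)^2) * indicator (I n i) s \<partial>lborel) \<partial>M)"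
      unfolding W_def by (intro nn_integral_sum lborel.borel_measurable_nn_integral aj)
    also have "\<dots> \<le> (\<Sum>i<(2::nat)^n. ennreal (c * h n) * ennreal (h n))"
      by (intro sum_mono term_le)
    also have "\<dots> = ennreal (c * T * h n)"
    proof -
      have "(\<Sum>i<(2::nat)^n. ennreal (c * h n) * ennreal (h n)) = ennreal (real (2^n) * (c * h n * h n))"
        using c0 hpos[of n] by (simp add: ennreal_mult ennreal_of_nat_eq_real_of_nat)
      also have "real (2^n) * (c * h n * h n) = c * T * h n"
        using h2n[of n] by (simp add: algebra_simps)
      finally show ?thesis .
    qed
    finally show ?thesis by (simp add: c_def)
  qed
  have AEgood: "AE \<omega> in M. \<forall>n i. i < 2^n \<longrightarrow> (\<forall>s\<in>{dyadic T n i..T}.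
      set_integrable lborel {dyadic T n i..s} (\<lambda>r. f \<omega> r (Y (dyadic T n i) y z \<omega> r) z) \<and>
      Y (dyadic T n i) y z \<omega> s = y - set_lebesgue_integral lborel {dyadic T n i..s} (\<lambda>r. f \<omega> r (Y (dyadic T n i) y z \<omega> r) z)
                                    + z \<bullet> (B s \<omega> - B (dyadic T n i) \<omega>))"
  proof -
    have "AE \<omega> in M. i < 2^n \<longrightarrow> (\<forall>s\<in>{dyadic T n i..T}.
      set_integrable lborel {dyadic T n i..s} (\<lambda>r. f \<omega> r (Y (dyadic T n i) y z \<omega> r) z) \<and>
      Y (dyadic T n i) y z \<omega> s = y - set_lebesgue_integral lborel {dyadic T n i..s} (\<lambda>r. f \<omega> r (Y (dyadic T n i) y z \<omega> r) z)
                                    + z \<bullet> (B s \<omega> - B (dyadic T n i) \<omega>))" for n i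
    proof (cases "i < 2^n")
      case True
      then have "dyadic T n i \<in> {0..T}" using dy0[of n i] dyle[of i n] by auto
      from Y_sol[OF this, of y z] show ?thesis by (rule AE_mp) (intro AE_I2, blast)
    next
      case False then show ?thesis by simp
    qed
    then show ?thesis by (simp add: AE_all_countable)
  qed
  have path: "(\<integral>\<^sup>+ s. ennreal ((fn n \<omega> s y z - f \<omega> s y z)^2) * indicator {0..T} s \<partial>lborel)
      \<le> ennreal (6*\<mu>^2*(h n)^2) * G \<omega> + ennreal (6*\<mu>^2) * W n \<omega>"
    if \<omega>: "\<omega> \<in> space M" and good: "\<forall>n i. i < 2^n \<longrightarrow> (\<forall>s\<in>{dyadic T n i..T}.
      set_integrable lborel {dyadic T n i..s} (\<lambda>r. f \<omega> r (Y (dyadic T n i) y z \<omega> r) z) \<and>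
      Y (dyadic T n i) y z \<omega> s = y - set_lebesgue_integral lborel {dyadic T n i..s} (\<lambda>r. f \<omega> r (Y (dyadic T n i) y z \<omega> r) z)
                                    + z \<bullet> (B s \<omega> - B (dyadic T n i) \<omega>))"
      and small: "3*\<mu>^2*(h n)^2 \<le> 1/2" for \<omega> n
  proof -
    define D where "D = (\<lambda>i s. \<bar>Y (dyadic T n i) y z \<omega> s - y\<bar> * indicator {dyadic T n i..T} s)"
    define F where "F = (\<lambda>i r. f \<omega> r (Y (dyadic T n i) y z \<omega> r) z)"
    have Dm: "D i \<in> borel_measurable lborel" if i: "i < 2^n" for i
    proof -
      define t where "t = dyadic T n i"
      have tT: "t \<in> {0..T}" using dy0[of n i] dyle[of i n] i by (auto simp: t_def)
      have "(\<lambda>s. Y t y z \<omega> s) \<in> borel_measurable (restrict_space lborel {t..T})"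
        using measurable_Pair2[OF Y_meas[OF tT] \<omega>] by simp
      then have "(\<lambda>s. indicator {t..T} s *\<^sub>R Y t y z \<omega> s) \<in> borel_measurable lborel"
        by (subst (asm) borel_measurable_restrict_space_iff) auto
      then have "(\<lambda>s. \<bar>indicator {t..T} s *\<^sub>R Y t y z \<omega> s - y * indicator {t..T} s\<bar>) \<in> borel_measurable lborel"
        by measurable
      then show ?thesis
        by (rule measurable_cong[THEN iffD1, rotated]) (auto simp: D_def t_def split: split_indicator)
    qed
    have est: "(\<integral>\<^sup>+ s. ennreal ((D i s)^2) * indicator (I n i) s \<partial>lborel)
        \<le> ennreal (6*(h n)^2) * (\<integral>\<^sup>+ s. ennreal ((gg \<omega> s)^2) * indicator (I n i) s \<partial>lborel)
          + 6 * (\<integral>\<^sup>+ s. ennreal ((a n i \<omega> s)^2) * indicator (I n i) s \<partial>lborel)" if i: "i < 2^n" for i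
    proof -
      define t where "t = dyadic T n i"
      define t' where "t' = dyadic T n (Suc i)"
      have ht: "t' - t = h n" using dySuc[of n i] by (simp add: t_def t'_def)
      have tt: "t \<le> t'" using ht hpos[of n] by simp
      have t0: "0 \<le> t" by (simp add: t_def dy0)
      have t'T: "t' \<le> T" using i unfolding t'_def by (intro dyle) simp
      have tT: "t \<in> {0..T}" using t0 tt t'T by auto
      have sol: "\<forall>s\<in>{t..T}. set_integrable lborel {t..s} (F i) \<and>
          Y t y z \<omega> s = y - (LINT r:{t..s}|lborel. F i r) + z \<bullet> (B s \<omega> - B t \<omega>)"
        using good i unfolding t_def F_def by blast
      obtain Kb where Kb: "\<And>r. r \<in> {0..T} \<Longrightarrow> norm (B r \<omega>) \<le> Kb"
      proof -
        have "compact ((\<lambda>r. B r \<omega>) ` {0..T})"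
          by (rule compact_continuous_image[OF continuous_on_subset[OF cont[OF \<omega>]]]) auto
        then have "bounded ((\<lambda>r. B r \<omega>) ` {0..T})" by (rule compact_imp_bounded)
        then obtain Kb where Kb: "\<forall>x\<in>(\<lambda>r. B r \<omega>) ` {0..T}. norm x \<le> Kb" unfolding bounded_iff by blast
        show ?thesis by (rule that[of Kb]) (use Kb in auto)
      qed
      have TT: "T \<in> {t..T}" using tT by auto
      have intT: "set_integrable lborel {t..T} (F i)" using sol TT by blast
      define K where "K = (LINT r:{t..T}|lborel. \<bar>F i r\<bar>) + norm z * (Kb + norm (B t \<omega>))"
      have basic: "D i s \<le> \<bar>LINT r:{t..s}|lborel. F i r\<bar> + \<bar>a n i \<omega> s\<bar>"
        and ints: "set_integrable lborel {t..s} (F i)"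
        and aeq: "a n i \<omega> s = z \<bullet> (B s \<omega> - B t \<omega>)"
        if s: "s \<in> {t..<t'}" for s
      proof -
        have sT: "s \<in> {t..T}" using s t'T by auto
        then have s0: "0 \<le> s" using t0 by auto
        show Y: "set_integrable lborel {t..s} (F i)" using sol sT by auto
        have Y: "Y t y z \<omega> s = y - (LINT r:{t..s}|lborel. F i r) + z \<bullet> (B s \<omega> - B t \<omega>)"
          using sol sT by auto
        show aeq: "a n i \<omega> s = z \<bullet> (B s \<omega> - B t \<omega>)" using s0 by (simp add: a_def t_def)
        have "D i s = \<bar>z \<bullet> (B s \<omega> - B t \<omega>) - (LINT r:{t..s}|lborel. F i r)\<bar>"
          using sT Y by (simp add: D_def t_def)
        also have "\<dots> \<le> \<bar>LINT r:{t..s}|lborel. F i r\<bar> + \<bar>z \<bullet> (B s \<omega> - B t \<omega>)\<bar>"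
          by linarith
        finally show "D i s \<le> \<bar>LINT r:{t..s}|lborel. F i r\<bar> + \<bar>a n i \<omega> s\<bar>" using aeq by simp
      qed
      have K: "D i s \<le> K" if s: "s \<in> {t..<t'}" for s
      proof -
        have sT: "s \<in> {t..T}" using s t'T by auto
        have e2: "\<bar>LINT r:{t..s}|lborel. F i r\<bar> \<le> (LINT r:{t..s}|lborel. \<bar>F i r\<bar>)"
          using set_integral_norm_bound[OF ints[OF s]] by simp
        have e3: "(LINT r:{t..s}|lborel. \<bar>F i r\<bar>) \<le> (LINT r:{t..T}|lborel. \<bar>F i r\<bar>)"
        proof -
          have i1: "integrable lborel (\<lambda>r. indicator {t..s} r *\<^sub>R \<bar>F i r\<bar>)"
            using set_integrable_norm[OF ints[OF s]] by (simp add: set_integrable_def)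
          have i2: "integrable lborel (\<lambda>r. indicator {t..T} r *\<^sub>R \<bar>F i r\<bar>)"
            using set_integrable_norm[OF intT] by (simp add: set_integrable_def)
          show ?thesis unfolding set_lebesgue_integral_def
            using sT by (intro integral_mono[OF i1 i2]) (auto split: split_indicator)
        qed
        have e4: "\<bar>a n i \<omega> s\<bar> \<le> norm z * (Kb + norm (B t \<omega>))"
        proof -
          have "\<bar>a n i \<omega> s\<bar> \<le> norm z * norm (B s \<omega> - B t \<omega>)"
            unfolding aeq[OF s] by (rule Cauchy_Schwarz_ineq2)
          also have "\<dots> \<le> norm z * (Kb + norm (B t \<omega>))"
            using Kb[of s] sT tT norm_triangle_ineq4[of "B s \<omega>" "B t \<omega>"] by (intro mult_left_mono) auto
          finally show ?thesis .
        qed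
        show ?thesis using basic[OF s] e2 e3 e4 unfolding K_def by linarith
      qed
      have hyp: "ennreal (D i s) \<le> (\<integral>\<^sup>+ r. ennreal \<bar>gg \<omega> r\<bar> * indicator {t..s} r \<partial>lborel)
          + ennreal \<mu> * (\<integral>\<^sup>+ r. ennreal \<bar>D i r\<bar> * indicator {t..s} r \<partial>lborel) + ennreal \<bar>a n i \<omega> s\<bar>"
        if s: "s \<in> {t..<t'}" for s
      proof -
        have sT: "s \<in> {t..T}" using s t'T by auto
        have "ennreal (D i s) \<le> ennreal (\<bar>LINT r:{t..s}|lborel. F i r\<bar> + \<bar>a n i \<omega> s\<bar>)"
          using basic[OF s] by (rule ennreal_leI)
        also have "\<dots> = ennreal \<bar>LINT r:{t..s}|lborel. F i r\<bar> + ennreal \<bar>a n i \<omega> s\<bar>" by simp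
        also have "ennreal \<bar>LINT r:{t..s}|lborel. F i r\<bar> \<le> ennreal (LINT r:{t..s}|lborel. \<bar>F i r\<bar>)"
          using set_integral_norm_bound[OF ints[OF s]] by (intro ennreal_leI) simp
        also have "\<dots> = (\<integral>\<^sup>+ r. ennreal \<bar>F i r\<bar> * indicator {t..s} r \<partial>lborel)"
          by (rule set_nn_abs[OF ints[OF s]])
        also have "\<dots> \<le> (\<integral>\<^sup>+ r. (ennreal \<bar>gg \<omega> r\<bar> + ennreal \<mu> * ennreal \<bar>D i r\<bar>) * indicator {t..s} r \<partial>lborel)"
        proof (intro nn_integral_mono)
          fix r
          show "ennreal \<bar>F i r\<bar> * indicator {t..s} r \<le> (ennreal \<bar>gg \<omega> r\<bar> + ennreal \<mu> * ennreal \<bar>D i r\<bar>) * indicator {t..s} r"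
          proof (cases "r \<in> {t..s}")
            case True
            then have r0T: "r \<in> {0..T}" and rtT: "r \<in> {t..T}" using tT sT by auto
            have "\<bar>f \<omega> r (Y t y z \<omega> r) z - f \<omega> r y z\<bar> \<le> \<mu> * (\<bar>Y t y z \<omega> r - y\<bar> + norm (z - z))"
              by (rule f_lip[OF \<omega> r0T])
            then have "\<bar>F i r\<bar> \<le> \<bar>gg \<omega> r\<bar> + \<mu> * \<bar>D i r\<bar>"
              using r0T rtT by (simp add: F_def gg_def g_def D_def t_def)
            then have "ennreal \<bar>F i r\<bar> \<le> ennreal (\<bar>gg \<omega> r\<bar> + \<mu> * \<bar>D i r\<bar>)" by (rule ennreal_leI)
            also have "\<dots> = ennreal \<bar>gg \<omega> r\<bar> + ennreal \<mu> * ennreal \<bar>D i r\<bar>"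
              using mu0 by (simp add: ennreal_mult)
            finally show ?thesis using True by simp
          qed simp
        qed
        also have "\<dots> = (\<integral>\<^sup>+ r. ennreal \<bar>gg \<omega> r\<bar> * indicator {t..s} r \<partial>lborel)
            + ennreal \<mu> * (\<integral>\<^sup>+ r. ennreal \<bar>D i r\<bar> * indicator {t..s} r \<partial>lborel)"
        proof -
          have m1: "(\<lambda>r. ennreal \<bar>gg \<omega> r\<bar> * indicator {t..s} r) \<in> borel_measurable lborel"
            using ggs[OF \<omega>] by measurable
          have m2: "(\<lambda>r. ennreal \<bar>D i r\<bar> * indicator {t..s} r) \<in> borel_measurable lborel"
            using Dm[OF i] by measurable
          have "(\<integral>\<^sup>+ r. (ennreal \<bar>gg \<omega> r\<bar> + ennreal \<mu> * ennreal \<bar>D i r\<bar>) * indicator {t..s} r \<partial>lborel)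
              = (\<integral>\<^sup>+ r. ennreal \<bar>gg \<omega> r\<bar> * indicator {t..s} r + ennreal \<mu> * (ennreal \<bar>D i r\<bar> * indicator {t..s} r) \<partial>lborel)"
            by (intro nn_integral_cong) (simp add: distrib_right mult.assoc)
          also have "\<dots> = (\<integral>\<^sup>+ r. ennreal \<bar>gg \<omega> r\<bar> * indicator {t..s} r \<partial>lborel)
              + (\<integral>\<^sup>+ r. ennreal \<mu> * (ennreal \<bar>D i r\<bar> * indicator {t..s} r) \<partial>lborel)"
            using m1 m2 by (intro nn_integral_add) auto
          also have "(\<integral>\<^sup>+ r. ennreal \<mu> * (ennreal \<bar>D i r\<bar> * indicator {t..s} r) \<partial>lborel)
              = ennreal \<mu> * (\<integral>\<^sup>+ r. ennreal \<bar>D i r\<bar> * indicator {t..s} r \<partial>lborel)"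
            using m2 by (rule nn_integral_cmult)
          finally show ?thesis .
        qed
        finally show ?thesis by (simp add: add_right_mono)
      qed
      have small': "3 * \<mu>^2 * (t' - t)^2 \<le> 1/2" using small ht by simp
      have "(\<integral>\<^sup>+ s. ennreal ((D i s)^2) * indicator {t..<t'} s \<partial>lborel)
        \<le> ennreal (6*(t'-t)^2) * (\<integral>\<^sup>+ s. ennreal ((gg \<omega> s)^2) * indicator {t..<t'} s \<partial>lborel)
          + 6 * (\<integral>\<^sup>+ s. ennreal ((a n i \<omega> s)^2) * indicator {t..<t'} s \<partial>lborel)"
        by (rule interval_est[OF tt mu0 small' Dm[OF i] ggs[OF \<omega>] as[OF \<omega>] _ K hyp])
           (simp add: D_def)
      then show ?thesis unfolding ht by (simp add: I_def t_def t'_def)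
    qed
    have pt: "AE s in lborel. ennreal ((fn n \<omega> s y z - f \<omega> s y z)^2) * indicator {0..T} s
        \<le> (\<Sum>i<2^n. ennreal (\<mu>^2) * (ennreal ((D i s)^2) * indicator (I n i) s))"
      using AE_lborel_singleton[of T]
    proof (eventually_elim)
      fix s :: real assume sT: "s \<noteq> T"
      show "ennreal ((fn n \<omega> s y z - f \<omega> s y z)^2) * indicator {0..T} s
        \<le> (\<Sum>i<2^n. ennreal (\<mu>^2) * (ennreal ((D i s)^2) * indicator (I n i) s))"
      proof (cases "0 \<le> s \<and> s < T")
        case False
        then have "s \<notin> {0..T}" using sT by auto
        then show ?thesis by simp
      next
        case True
        obtain i where i: "i < 2^n" "s \<in> I n i"
          using dyadic_exists[OF T, of s n] True unfolding I_def by blast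
        have fneq: "fn n \<omega> s y z = f \<omega> s (Y (dyadic T n i) y z \<omega> s) z"
          unfolding fn_def
          using sum_dyadic_ind[OF T i(1), of s "\<lambda>j. f \<omega> s (Y (dyadic T n j) y z \<omega> s) z"] i(2)
          by (simp add: I_def)
        have sTi: "s \<in> {dyadic T n i..T}" using i(2) True by (auto simp: I_def)
        have s0T: "s \<in> {0..T}" using True by auto
        have "\<bar>f \<omega> s (Y (dyadic T n i) y z \<omega> s) z - f \<omega> s y z\<bar> \<le> \<mu> * (\<bar>Y (dyadic T n i) y z \<omega> s - y\<bar> + norm (z - z))"
          by (rule f_lip[OF \<omega> s0T])
        then have le: "\<bar>fn n \<omega> s y z - f \<omega> s y z\<bar> \<le> \<mu> * D i s"
          using sTi by (simp add: fneq D_def)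
        have "(fn n \<omega> s y z - f \<omega> s y z)^2 \<le> (\<mu> * D i s)^2"
          using le by (metis abs_ge_zero power2_abs power_mono)
        then have "ennreal ((fn n \<omega> s y z - f \<omega> s y z)^2) \<le> ennreal ((\<mu> * D i s)^2)" by (rule ennreal_leI)
        also have "\<dots> = ennreal (\<mu>^2) * (ennreal ((D i s)^2) * indicator (I n i) s)"
          using i(2) by (simp add: power_mult_distrib ennreal_mult)
        also have "\<dots> \<le> (\<Sum>i<2^n. ennreal (\<mu>^2) * (ennreal ((D i s)^2) * indicator (I n i) s))"
          using i(1) by (intro member_le_sum) auto
        finally show ?thesis using s0T by simp
      qed
    qed
    have "(\<integral>\<^sup>+ s. ennreal ((fn n \<omega> s y z - f \<omega> s y z)^2) * indicator {0..T} s \<partial>lborel)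
        \<le> (\<integral>\<^sup>+ s. (\<Sum>i<2^n. ennreal (\<mu>^2) * (ennreal ((D i s)^2) * indicator (I n i) s)) \<partial>lborel)"
      by (rule nn_integral_mono_AE[OF pt])
    also have "\<dots> = (\<Sum>i<2^n. ennreal (\<mu>^2) * (\<integral>\<^sup>+ s. ennreal ((D i s)^2) * indicator (I n i) s \<partial>lborel))"
    proof -
      have m: "(\<lambda>s. ennreal ((D i s)^2) * indicator (I n i) s) \<in> borel_measurable lborel" if "i \<in> {..<2^n}" for i
      proof -
        have [measurable]: "D i \<in> borel_measurable lborel" using that by (intro Dm) auto
        show ?thesis unfolding I_def by measurable
      qed
      have "(\<integral>\<^sup>+ s. (\<Sum>i<2^n. ennreal (\<mu>^2) * (ennreal ((D i s)^2) * indicator (I n i) s)) \<partial>lborel)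
          = (\<Sum>i<2^n. (\<integral>\<^sup>+ s. ennreal (\<mu>^2) * (ennreal ((D i s)^2) * indicator (I n i) s) \<partial>lborel))"
        using m by (intro nn_integral_sum) auto
      also have "\<dots> = (\<Sum>i<2^n. ennreal (\<mu>^2) * (\<integral>\<^sup>+ s. ennreal ((D i s)^2) * indicator (I n i) s \<partial>lborel))"
        using m by (intro sum.cong refl nn_integral_cmult) auto
      finally show ?thesis .
    qed
    also have "\<dots> \<le> (\<Sum>i<2^n. ennreal (\<mu>^2) * (ennreal (6*(h n)^2) * (\<integral>\<^sup>+ s. ennreal ((gg \<omega> s)^2) * indicator (I n i) s \<partial>lborel)
          + 6 * (\<integral>\<^sup>+ s. ennreal ((a n i \<omega> s)^2) * indicator (I n i) s \<partial>lborel)))"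
      by (intro sum_mono mult_left_mono est) auto
    also have "\<dots> = ennreal (6*\<mu>^2*(h n)^2) * (\<Sum>i<2^n. (\<integral>\<^sup>+ s. ennreal ((gg \<omega> s)^2) * indicator (I n i) s \<partial>lborel))
          + ennreal (6*\<mu>^2) * W n \<omega>"
    proof -
      have c1: "ennreal (\<mu>^2) * ennreal (6*(h n)^2) = ennreal (6*\<mu>^2*(h n)^2)"
        by (simp add: ennreal_mult[symmetric] mult.commute mult.left_commute)
      have c2: "ennreal (\<mu>^2) * 6 = ennreal (6*\<mu>^2)"
        by (simp add: ennreal_mult mult.commute)
      show ?thesis
        unfolding W_def distrib_left sum.distrib sum_distrib_left mult.assoc[symmetric] c1 c2 ..
    qed
    also have "\<dots> \<le> ennreal (6*\<mu>^2*(h n)^2) * G \<omega> + ennreal (6*\<mu>^2) * W n \<omega>"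
    proof (intro add_mono mult_left_mono order_refl)
      have m: "(\<lambda>s. ennreal ((gg \<omega> s)^2) * indicator (I n i) s) \<in> borel_measurable lborel" for i
        using ggs[OF \<omega>] unfolding I_def by measurable
      have "(\<Sum>i<2^n. (\<integral>\<^sup>+ s. ennreal ((gg \<omega> s)^2) * indicator (I n i) s \<partial>lborel))
          = (\<integral>\<^sup>+ s. (\<Sum>i<2^n. ennreal ((gg \<omega> s)^2) * indicator (I n i) s) \<partial>lborel)"
        using m by (intro nn_integral_sum[symmetric]) auto
      also have "\<dots> \<le> (\<integral>\<^sup>+ s. ennreal ((gg \<omega> s)^2) \<partial>lborel)"
      proof (intro nn_integral_mono)
        fix s
        have "(\<Sum>i<2^n. ennreal ((gg \<omega> s)^2) * indicator (I n i) s)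
            = ennreal ((gg \<omega> s)^2) * (\<Sum>i<2^n. indicator (I n i) s)"
          by (simp add: sum_distrib_left)
        also have "\<dots> \<le> ennreal ((gg \<omega> s)^2) * 1"
          using sum_dyadic_ind_le1[OF T, of n s] unfolding I_def by (intro mult_left_mono) auto
        finally show "(\<Sum>i<2^n. ennreal ((gg \<omega> s)^2) * indicator (I n i) s) \<le> ennreal ((gg \<omega> s)^2)" by simp
      qed
      also have "\<dots> = G \<omega>" by (simp add: G_gg)
      finally show "(\<Sum>i<2^n. (\<integral>\<^sup>+ s. ennreal ((gg \<omega> s)^2) * indicator (I n i) s \<partial>lborel)) \<le> G \<omega>" .
    qed auto
    finally show ?thesis .
  qed
  have hlim: "h \<longlonglongrightarrow> 0"
  proof -
    have "(\<lambda>n. T * (1/2)^n) \<longlonglongrightarrow> T * 0"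
      by (intro tendsto_mult tendsto_const LIMSEQ_realpow_zero) auto
    moreover have "(\<lambda>n. T * (1/2)^n) = h" by (auto simp: h_def power_divide fun_eq_iff)
    ultimately show ?thesis by simp
  qed
  have "(\<lambda>n. 3*\<mu>^2*(h n)^2) \<longlonglongrightarrow> 3*\<mu>^2*0^2"
    by (intro tendsto_intros hlim)
  then have ev: "eventually (\<lambda>n. 3*\<mu>^2*(h n)^2 < 1/2) sequentially"
    by (intro order_tendstoD(2)) auto
  define c where "c = (norm z)^2 * real CARD('d)"
  define b where "b = (\<lambda>n. ennreal (6*\<mu>^2*(h n)^2 * eg + 6*\<mu>^2 * (c * T * h n)))"
  have blim: "b \<longlonglongrightarrow> 0"
  proof -
    have "(\<lambda>n. 6*\<mu>^2*(h n)^2 * eg + 6*\<mu>^2 * (c * T * h n)) \<longlonglongrightarrow> 6*\<mu>^2*0^2 * eg + 6*\<mu>^2 * (c * T * 0)"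
      by (intro tendsto_intros hlim)
    then have "b \<longlonglongrightarrow> ennreal (6*\<mu>^2*0^2 * eg + 6*\<mu>^2 * (c * T * 0))"
      unfolding b_def by (rule tendsto_ennrealI)
    then show ?thesis by simp
  qed
  have bound: "eventually (\<lambda>n. (\<integral>\<^sup>+\<omega>. (\<integral>\<^sup>+ s. ennreal ((fn n \<omega> s y z - f \<omega> s y z)^2) * indicator {0..T} s \<partial>lborel) \<partial>M) \<le> b n) sequentially"
    using ev
  proof (eventually_elim)
    fix n assume small: "3*\<mu>^2*(h n)^2 < 1/2"
    have "(\<integral>\<^sup>+\<omega>. (\<integral>\<^sup>+ s. ennreal ((fn n \<omega> s y z - f \<omega> s y z)^2) * indicator {0..T} s \<partial>lborel) \<partial>M)
        \<le> (\<integral>\<^sup>+\<omega>. ennreal (6*\<mu>^2*(h n)^2) * G \<omega> + ennreal (6*\<mu>^2) * W n \<omega> \<partial>M)"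
      using AE_space AEgood
    proof (intro nn_integral_mono_AE, eventually_elim)
      fix \<omega> assume "\<omega> \<in> space M" and good: "\<forall>n i. i < 2^n \<longrightarrow> (\<forall>s\<in>{dyadic T n i..T}.
        set_integrable lborel {dyadic T n i..s} (\<lambda>r. f \<omega> r (Y (dyadic T n i) y z \<omega> r) z) \<and>
        Y (dyadic T n i) y z \<omega> s = y - set_lebesgue_integral lborel {dyadic T n i..s} (\<lambda>r. f \<omega> r (Y (dyadic T n i) y z \<omega> r) z)
                                      + z \<bullet> (B s \<omega> - B (dyadic T n i) \<omega>))"
      then show "(\<integral>\<^sup>+ s. ennreal ((fn n \<omega> s y z - f \<omega> s y z)^2) * indicator {0..T} s \<partial>lborel)
          \<le> ennreal (6*\<mu>^2*(h n)^2) * G \<omega> + ennreal (6*\<mu>^2) * W n \<omega>"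
        using small by (intro path) auto
    qed
    also have "\<dots> = ennreal (6*\<mu>^2*(h n)^2) * (\<integral>\<^sup>+\<omega>. G \<omega> \<partial>M) + ennreal (6*\<mu>^2) * (\<integral>\<^sup>+\<omega>. W n \<omega> \<partial>M)"
      using Gm Wm[of n] by (simp add: nn_integral_add nn_integral_cmult)
    also have "\<dots> \<le> ennreal (6*\<mu>^2*(h n)^2) * ennreal eg + ennreal (6*\<mu>^2) * ennreal (c * T * h n)"
      using EW[of n] eg by (intro add_mono mult_left_mono) (auto simp: c_def)
    also have "\<dots> = b n"
      using eg(2) hpos[of n] T unfolding b_def c_def
      by (simp add: ennreal_mult[symmetric] ennreal_plus[symmetric] del: ennreal_plus)
    finally show "(\<integral>\<^sup>+\<omega>. (\<integral>\<^sup>+ s. ennreal ((fn n \<omega> s y z - f \<omega> s y z)^2) * indicator {0..T} s \<partial>lborel) \<partial>M) \<le> b n" .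
  qed
  show ?thesis
    by (rule tendsto_sandwich[OF _ bound tendsto_const blim]) simp
qed

end
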